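(* Fix $\varepsilon>0$. Let $S,S'\subset\mathbb{R}^n$ be finite sets and $h\colon S\to\mathbb{R}^n$, $h'\colon S'\to\mathbb{R}^n$ maps, and let $M^h$, $M^{h'}$ be the $\mathbb{R}$-persistence modules obtained from the grid filtrations $\{F_r\}$, $\{F'_r\}$ of $h$ and $h'$ at scale $\varepsilon$. If $d_H(\operatorname{Gr}(h),\operatorname{Gr}(h'))\le\varepsilon$, where $d_H$ is the Hausdorff distance induced by the $L^\infty$ metric $d_\infty$ on $\mathbb{R}^n\times\mathbb{R}^n$, then $d_I(M^h,M^{h'})\le\varepsilon$.
   Context: Fix a field $K$; $H$ is homology (fixed degree) with coefficients in $K$. $d_\infty((x_i),(y_i))=\max_i|x_i-y_i|$ on $\mathbb{R}^n$ and on $\mathbb{R}^n\times\mathbb{R}^n=\mathbb{R}^{2n}$. The $\varepsilon$-grid consists of the cubes $[a_1\varepsilon,(a_1+1)\varepsilon]\times\dots\times[a_n\varepsilon,(a_n+1)\varepsilon]$, $a_i\in\mathbb{Z}$. For $h\colon S\to\mathbb{R}^n$ with $\operatorname{Gr}(h)=\{(s,h(s)):s\in S\}$, let $F^h_\varepsilon$ be the union of all products $X'\times Y'$ of grid cubes with $(X'\times Y')\cap\operatorname{Gr}(h)\ne\emptyset$. For integers $i\ge1$ let $F_{i\varepsilon}:=\{z\in\mathbb{R}^{2n}: d_\infty(z,F^h_\varepsilon)\le i\varepsilon\}$, and for $r\in\mathbb{R}$ set $F_r:=\emptyset$ if $r<\varepsilon$ and $F_r:=F_{i\varepsilon}$ if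 $i\varepsilon\le r<(i+1)\varepsilon$. With $p,q\colon\mathbb{R}^n\times\mathbb{R}^n\to\mathbb{R}^n$ the two projections, each $r$ gives a diagram $p(F_r)\leftarrow F_r\rightarrow q(F_r)$; applying $H$ gives a representation $V_r$ of the quiver $1\leftarrow2\rightarrow3$, and inclusions give morphisms $V_s\to V_r$ for $s\le r$. Interval representations $\mathbb{I}[b,d]$ ($1\le b\le d\le3$) have $K$ at vertices $b,\dots,d$, $0$ elsewhere, identity maps between copies of $K$, zero otherwise. Choosing isomorphisms $\eta_r\colon V_r\to\bigoplus\mathbb{I}[b,d]^{m^r_{b,d}}$, the transition maps are $\pi_r\circ\eta_r\circ(V_s\to V_r)\circ\eta_s^{-1}\circ\iota_s\colon\mathbb{I}[1,3]^{m^s_{1,3}}\to\mathbb{I}[1,3]^{m^r_{1,3}}$ ($\iota_s$ summand inclusion, $\pi_r$ summand projection), identified with linear maps $K^{m^s_{1,3}}\to K^{m^r_{1,3}}$; $M^h$ is $r\mapsto K^{m^r_{1,3}}$ with these maps (well defined up to isomorphism). An $\mathbb{R}$-persistence module is a functor from $(\mathbb{R},\le)$ to finite-dimensional $K$-vector spaces with transition maps $\varphi_M(s,t)$; $M(\delta)_t:=M_{t+\delta}$; $\varphi_M(\delta)_t:=\varphi_M(t,t+\delta)$. $M,N$ are $\delta$-interleaved if there are morphisms $f\colon M\to N(\delta)$, $g\colon N\to M(\delta)$ with $g(\delta)f=\varphi_M(2\delta)$, $f(\delta)g=\varphi_N(2\delta)$; $d_I(M,N)$ is the infimum of such $\delta$.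 *)

theory Defs
  imports "HOL-Homology.Homology" "HOL-Library.Extended_Real"
begin

text \<open>Singular K-chains of degree p in a space X: finitely supported functions from
singular p-simplices (in the sense of HOL-Homology) to the field K.\<close>

type_synonym ('a, 'k) kchain = "((nat \<Rightarrow> real) \<Rightarrow> 'a) \<Rightarrow> 'k"

definition kchain :: "nat \<Rightarrow> 'a topology \<Rightarrow> ('a, 'k::field) kchain \<Rightarrow> bool" where
  "kchain p X c \<longleftrightarrow> finite {f. c f \<noteq> 0} \<and> (\<forall>f. c f \<noteq> 0 \<longrightarrow> singular_simplex p X f)"

text \<open>Boundary operator (same formula as HOL-Homology's chain_boundary, K coefficients).\<close>
definition kboundary :: "nat \<Rightarrow> ('a, 'k::field) kchain \<Rightarrow> ('a, 'k) kchain" where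
  "kboundary p c = (\<lambda>g. if p = 0 then 0 else
      (\<Sum>f\<in>{f. c f \<noteq> 0}. \<Sum>k\<le>p. if singular_face p k f = g then (-1) ^ k * c f else 0))"

definition kcycles :: "nat \<Rightarrow> 'a topology \<Rightarrow> ('a, 'k::field) kchain set" where
  "kcycles p X = {c. kchain p X c \<and> kboundary p c = (\<lambda>_. 0)}"

definition kbounds :: "nat \<Rightarrow> 'a topology \<Rightarrow> ('a, 'k::field) kchain set" where
  "kbounds p X = {kboundary (Suc p) c | c. kchain (Suc p) X c}"

definition kchain_map :: "nat \<Rightarrow> ('a \<Rightarrow> 'b) \<Rightarrow> ('a, 'k::field) kchain \<Rightarrow> ('b, 'k) kchain" where
  "kchain_map p g c = (\<lambda>f'. \<Sum>f\<in>{f. c f \<noteq> 0 \<and> simplex_map p g f = f'}. c f)"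

text \<open>K^m, represented as functions nat => K vanishing from index m on.\<close>
definition Kvec :: "nat \<Rightarrow> (nat \<Rightarrow> 'k::field) set" where
  "Kvec m = {x. \<forall>i\<ge>m. x i = 0}"

definition klinear :: "nat \<Rightarrow> nat \<Rightarrow> ((nat \<Rightarrow> 'k::field) \<Rightarrow> (nat \<Rightarrow> 'k)) \<Rightarrow> bool" where
  "klinear a b f \<longleftrightarrow> (\<forall>x\<in>Kvec a. f x \<in> Kvec b)
     \<and> (\<forall>x\<in>Kvec a. \<forall>y\<in>Kvec a. f (\<lambda>i. x i + y i) = (\<lambda>i. f x i + f y i))
     \<and> (\<forall>c. \<forall>x\<in>Kvec a. f (\<lambda>i. c * x i) = (\<lambda>i. c * f x i))"

text \<open>The intervals [b,d], 1 <= b <= d <= 3, of the quiver 1 <- 2 -> 3.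
An element of the direct sum of interval modules (with multiplicities m) at vertex v is a
function assigning to each pair (b,d) a vector of K^(m(b,d)) if v lies in [b,d], and 0 otherwise.\<close>
definition in_interval :: "nat \<Rightarrow> nat \<times> nat \<Rightarrow> bool" where
  "in_interval v bd \<longleftrightarrow> 1 \<le> fst bd \<and> fst bd \<le> v \<and> v \<le> snd bd \<and> snd bd \<le> 3"

definition intdim :: "(nat \<times> nat \<Rightarrow> nat) \<Rightarrow> nat \<Rightarrow> nat \<times> nat \<Rightarrow> nat" where
  "intdim m v bd = (if in_interval v bd then m bd else 0)"

definition DSum :: "(nat \<times> nat \<Rightarrow> nat) \<Rightarrow> nat \<Rightarrow> (nat \<times> nat \<Rightarrow> nat \<Rightarrow> 'k::field) set" where
  "DSum m v = {x. \<forall>bd. x bd \<in> Kvec (intdim m v bd)}"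

definition intmap :: "nat \<Rightarrow> nat \<Rightarrow> (nat \<times> nat \<Rightarrow> nat \<Rightarrow> 'k::field) \<Rightarrow> (nat \<times> nat \<Rightarrow> nat \<Rightarrow> 'k)" where
  "intmap v w x = (\<lambda>bd i. if in_interval v bd \<and> in_interval w bd then x bd i else 0)"

definition summand13 :: "(nat \<Rightarrow> 'k::field) \<Rightarrow> (nat \<times> nat \<Rightarrow> nat \<Rightarrow> 'k)" where
  "summand13 x = (\<lambda>bd. if bd = (1, 3) then x else (\<lambda>_. 0))"

text \<open>phi is (induced by) a linear isomorphism H_p(X;K) = Z_p/B_p --> W:
phi is linear on the cycles, maps them onto W, and its kernel on cycles is B_p.\<close>
definition homology_iso ::
  "nat \<Rightarrow> 'a topology \<Rightarrow> (nat \<times> nat \<Rightarrow> nat \<Rightarrow> 'k::field) set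
     \<Rightarrow> (('a, 'k) kchain \<Rightarrow> (nat \<times> nat \<Rightarrow> nat \<Rightarrow> 'k)) \<Rightarrow> bool" where
  "homology_iso p X W \<phi> \<longleftrightarrow>
     (\<forall>a\<in>kcycles p X. \<forall>b\<in>kcycles p X. \<phi> (\<lambda>f. a f + b f) = (\<lambda>bd i. \<phi> a bd i + \<phi> b bd i))
   \<and> (\<forall>c. \<forall>a\<in>kcycles p X. \<phi> (\<lambda>f. c * a f) = (\<lambda>bd i. c * \<phi> a bd i))
   \<and> \<phi> ` kcycles p X = W
   \<and> (\<forall>a\<in>kcycles p X. \<phi> a = (\<lambda>_ _. 0) \<longleftrightarrow> a \<in> kbounds p X)"

text \<open>An isomorphism eta of the representation H_p(P) <- H_p(F) -> H_p(Q) (maps induced by the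
two projections) with the direct sum of interval modules with multiplicities m.\<close>
definition quiver_decomp ::
  "nat \<Rightarrow> ('a::topological_space \<times> 'a) set \<Rightarrow> (nat \<times> nat \<Rightarrow> nat)
    \<Rightarrow> (('a, 'k::field) kchain \<Rightarrow> (nat \<times> nat \<Rightarrow> nat \<Rightarrow> 'k))
    \<Rightarrow> (('a \<times> 'a, 'k) kchain \<Rightarrow> (nat \<times> nat \<Rightarrow> nat \<Rightarrow> 'k))
    \<Rightarrow> (('a, 'k) kchain \<Rightarrow> (nat \<times> nat \<Rightarrow> nat \<Rightarrow> 'k)) \<Rightarrow> bool" where
  "quiver_decomp p F m \<eta>1 \<eta>2 \<eta>3 \<longleftrightarrow>
     homology_iso p (subtopology euclidean (fst ` F)) (DSum m 1) \<eta>1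
   \<and> homology_iso p (subtopology euclidean F) (DSum m 2) \<eta>2
   \<and> homology_iso p (subtopology euclidean (snd ` F)) (DSum m 3) \<eta>3
   \<and> (\<forall>z\<in>kcycles p (subtopology euclidean F). \<eta>1 (kchain_map p fst z) = intmap 2 1 (\<eta>2 z))
   \<and> (\<forall>z\<in>kcycles p (subtopology euclidean F). \<eta>3 (kchain_map p snd z) = intmap 2 3 (\<eta>2 z))"

definition linf_dist :: "real^'n \<Rightarrow> real^'n \<Rightarrow> real" where
  "linf_dist x y = Max (range (\<lambda>i. \<bar>x $ i - y $ i\<bar>))"

definition linf_dist2 :: "((real^'n) \<times> (real^'n)) \<Rightarrow> ((real^'n) \<times> (real^'n)) \<Rightarrow> real" where
  "linf_dist2 z w = max (linf_dist (fst z) (fst w)) (linf_dist (snd z) (snd w))"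

definition hausdorff_linf :: "((real^'n) \<times> (real^'n)) set \<Rightarrow> ((real^'n) \<times> (real^'n)) set \<Rightarrow> ereal" where
  "hausdorff_linf A B = max (SUP a\<in>A. INF b\<in>B. ereal (linf_dist2 a b))
                            (SUP b\<in>B. INF a\<in>A. ereal (linf_dist2 a b))"

definition graph_of :: "(real^'n) set \<Rightarrow> (real^'n \<Rightarrow> real^'n) \<Rightarrow> ((real^'n) \<times> (real^'n)) set" where
  "graph_of S h = {(s, h s) | s. s \<in> S}"

definition grid_cube :: "real \<Rightarrow> ('n \<Rightarrow> int) \<Rightarrow> (real^'n) set" where
  "grid_cube \<epsilon> a = {x. \<forall>i. real_of_int (a i) * \<epsilon> \<le> x $ i \<and> x $ i \<le> (real_of_int (a i) + 1) * \<epsilon>}"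

definition grid_cover :: "real \<Rightarrow> (real^'n) set \<Rightarrow> (real^'n \<Rightarrow> real^'n) \<Rightarrow> ((real^'n) \<times> (real^'n)) set" where
  "grid_cover \<epsilon> S h = \<Union> {grid_cube \<epsilon> a \<times> grid_cube \<epsilon> b | a b.
                               (grid_cube \<epsilon> a \<times> grid_cube \<epsilon> b) \<inter> graph_of S h \<noteq> {}}"

definition grid_thick :: "real \<Rightarrow> (real^'n) set \<Rightarrow> (real^'n \<Rightarrow> real^'n) \<Rightarrow> nat \<Rightarrow> ((real^'n) \<times> (real^'n)) set" where
  "grid_thick \<epsilon> S h i = {z. (INF w\<in>grid_cover \<epsilon> S h. ereal (linf_dist2 z w)) \<le> ereal (real i * \<epsilon>)}"

definition grid_filt :: "real \<Rightarrow> (real^'n) set \<Rightarrow> (real^'n \<Rightarrow> real^'n) \<Rightarrow> real \<Rightarrow> ((real^'n) \<times> (real^'n)) set" where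
  "grid_filt \<epsilon> S h r = (if r < \<epsilon> then {} else grid_thick \<epsilon> S h (nat \<lfloor>r / \<epsilon>\<rfloor>))"

type_synonym 'k pmod = "(real \<Rightarrow> nat) \<times> (real \<Rightarrow> real \<Rightarrow> (nat \<Rightarrow> 'k) \<Rightarrow> (nat \<Rightarrow> 'k))"

definition is_Mh :: "real \<Rightarrow> (real^'n) set \<Rightarrow> (real^'n \<Rightarrow> real^'n) \<Rightarrow> nat \<Rightarrow> 'k::field pmod \<Rightarrow> bool" where
  "is_Mh \<epsilon> S h p M \<longleftrightarrow>
    (\<exists>m \<eta>1 \<eta>2 \<eta>3.
       (\<forall>r. quiver_decomp p (grid_filt \<epsilon> S h r) (m r) (\<eta>1 r) (\<eta>2 r) (\<eta>3 r))
     \<and> (\<forall>r. fst M r = m r (1, 3))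
     \<and> (\<forall>s r. s \<le> r \<longrightarrow> klinear (fst M s) (fst M r) (snd M s r)
          \<and> (\<forall>x\<in>Kvec (fst M s). \<forall>z\<in>kcycles p (subtopology euclidean (grid_filt \<epsilon> S h s)).
                \<eta>2 s z = summand13 x \<longrightarrow> snd M s r x = \<eta>2 r z (1, 3))))"

definition pmod_morph :: "real \<Rightarrow> 'k::field pmod \<Rightarrow> 'k pmod \<Rightarrow> (real \<Rightarrow> (nat \<Rightarrow> 'k) \<Rightarrow> (nat \<Rightarrow> 'k)) \<Rightarrow> bool" where
  "pmod_morph \<delta> M N f \<longleftrightarrow>
     (\<forall>t. klinear (fst M t) (fst N (t + \<delta>)) (f t))
   \<and> (\<forall>s t. s \<le> t \<longrightarrow> (\<forall>x\<in>Kvec (fst M s). snd N (s + \<delta>) (t + \<delta>) (f s x) = f t (snd M s t x)))"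

definition interleaved :: "real \<Rightarrow> 'k::field pmod \<Rightarrow> 'k pmod \<Rightarrow> bool" where
  "interleaved \<delta> M N \<longleftrightarrow> (\<exists>f g. pmod_morph \<delta> M N f \<and> pmod_morph \<delta> N M g
     \<and> (\<forall>t. \<forall>x\<in>Kvec (fst M t). g (t + \<delta>) (f t x) = snd M t (t + 2 * \<delta>) x)
     \<and> (\<forall>t. \<forall>x\<in>Kvec (fst N t). f (t + \<delta>) (g t x) = snd N t (t + 2 * \<delta>) x))"

definition interleaving_dist :: "'k::field pmod \<Rightarrow> 'k pmod \<Rightarrow> ereal" where
  "interleaving_dist M N = (INF \<delta>\<in>{\<delta>. 0 \<le> \<delta> \<and> interleaved \<delta> M N}. ereal \<delta>)"

end

theory Submission
  imports Defs
begin


lemma kboundary_superset: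
  assumes "finite T" "{f. c f \<noteq> 0} \<subseteq> T"
  shows "kboundary p c g = (if p = 0 then 0 else
      (\<Sum>f\<in>T. \<Sum>k\<le>p. if singular_face p k f = g then (-1) ^ k * c f else 0))"
proof (cases "p = 0")
  case False
  have "(\<Sum>f\<in>{f. c f \<noteq> 0}. \<Sum>k\<le>p. if singular_face p k f = g then (-1) ^ k * c f else 0)
     = (\<Sum>f\<in>T. \<Sum>k\<le>p. if singular_face p k f = g then (-1) ^ k * c f else 0)"
    by (rule sum.mono_neutral_left) (use assms in \<open>auto intro!: sum.neutral split: if_splits\<close>)
  then show ?thesis using False by (simp add: kboundary_def)
qed (simp add: kboundary_def)

lemma kchain_finite: "kchain p X c \<Longrightarrow> finite {f. c f \<noteq> 0}"
  by (simp add: kchain_def)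

lemma kboundary_add:
  assumes "finite {f. a f \<noteq> 0}" "finite {f. b f \<noteq> 0}"
  shows "kboundary p (\<lambda>f. a f + b f) = (\<lambda>g. kboundary p a g + kboundary p b g)"
proof
  fix g
  let ?T = "{f. a f \<noteq> 0} \<union> {f. b f \<noteq> 0}"
  have fT: "finite ?T" using assms by auto
  show "kboundary p (\<lambda>f. a f + b f) g = kboundary p a g + kboundary p b g"
    apply (subst kboundary_superset[OF fT], force)
    apply (subst kboundary_superset[OF fT], force)
    apply (subst kboundary_superset[OF fT], force)
    by (simp add: sum.distrib[symmetric] distrib_left if_distrib cong: if_cong)
qed

lemma kboundary_scale:
  assumes "finite {f. a f \<noteq> 0}"
  shows "kboundary p (\<lambda>f. c * a f) = (\<lambda>g. c * kboundary p a g)"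
proof
  fix g
  let ?T = "{f. a f \<noteq> 0}"
  show "kboundary p (\<lambda>f. c * a f) g = c * kboundary p a g"
    apply (subst kboundary_superset[OF assms], force)
    apply (subst kboundary_superset[OF assms], force)
    by (auto simp: sum_distrib_left intro!: sum.cong)
qed

lemma kchain_add: "kchain p X a \<Longrightarrow> kchain p X b \<Longrightarrow> kchain p X (\<lambda>f. a f + b f)"
  unfolding kchain_def
  apply (intro conjI)
   apply (rule finite_subset[of _ "{f. a f \<noteq> 0} \<union> {f. b f \<noteq> 0}"]; force)
  by (metis add.right_neutral)

lemma kchain_scale: "kchain p X a \<Longrightarrow> kchain p X (\<lambda>f. c * a f)"
  unfolding kchain_def
  by (auto intro: finite_subset[of _ "{f. a f \<noteq> 0}"])

lemma kcycles_add: "a \<in> kcycles p X \<Longrightarrow> b \<in> kcycles p X \<Longrightarrow> (\<lambda>f. a f + b f) \<in> kcycles p X"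
  unfolding kcycles_def using kchain_add kboundary_add kchain_finite by fastforce

lemma kcycles_scale: "a \<in> kcycles p X \<Longrightarrow> (\<lambda>f. c * a f) \<in> kcycles p X"
  unfolding kcycles_def using kchain_scale kboundary_scale kchain_finite by fastforce

lemma kchain_mono:
  "A \<subseteq> B \<Longrightarrow> kchain p (subtopology euclidean A) c \<Longrightarrow> kchain p (subtopology euclidean B) c"
  unfolding kchain_def by (auto simp: singular_simplex_subtopology)

lemma kcycles_mono:
  "A \<subseteq> B \<Longrightarrow> kcycles p (subtopology euclidean A) \<subseteq> kcycles p (subtopology euclidean B)"
  unfolding kcycles_def using kchain_mono by blast

lemma kbounds_mono:
  "A \<subseteq> B \<Longrightarrow> kbounds p (subtopology euclidean A) \<subseteq> kbounds p (subtopology euclidean B)"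
  unfolding kbounds_def using kchain_mono by blast

lemma kchain_map_kchain:
  assumes "continuous_map X Y g" "kchain p X c"
  shows "kchain p Y (kchain_map p g c)"
proof -
  have sub: "{f'. kchain_map p g c f' \<noteq> 0} \<subseteq> simplex_map p g ` {f. c f \<noteq> 0}"
  proof
    fix f' assume "f' \<in> {f'. kchain_map p g c f' \<noteq> 0}"
    then have "{f. c f \<noteq> 0 \<and> simplex_map p g f = f'} \<noteq> {}"
      by (auto simp: kchain_map_def elim!: sum.not_neutral_contains_not_neutral)
    then show "f' \<in> simplex_map p g ` {f. c f \<noteq> 0}" by auto
  qed
  show ?thesis
    unfolding kchain_def
  proof
    show "finite {f'. kchain_map p g c f' \<noteq> 0}"
      using sub assms(2) unfolding kchain_def by (meson finite_imageI finite_subset)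
    show "\<forall>f'. kchain_map p g c f' \<noteq> 0 \<longrightarrow> singular_simplex p Y f'"
      using sub assms by (auto simp: kchain_def intro: singular_simplex_simplex_map)
  qed
qed

lemma simplex_map_restrict:
  "simplex_map q g (restrict c (standard_simplex q)) = simplex_map q g c"
  by (auto simp: simplex_map_def restrict_def)

lemma face_map:
  assumes "1 \<le> p" "k \<le> p"
  shows "singular_face p k (simplex_map p g f) = simplex_map (p - Suc 0) g (singular_face p k f)"
  using assms simplical_face_in_standard_simplex[OF assms]
  by (auto simp: singular_face_simplex_map singular_face_def simplex_map_def fun_eq_iff)

lemma kchain_map_boundary:
  assumes fin: "finite {f. c f \<noteq> 0}"
  shows "kboundary p (kchain_map p g c) = kchain_map (p - Suc 0) g (kboundary p c)"
proof (cases "p = 0")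
  case True
  then show ?thesis by (simp add: kboundary_def kchain_map_def fun_eq_iff)
next
  case False
  let ?C = "{f. c f \<noteq> 0}"
  let ?\<mu> = "simplex_map p g"
  let ?\<mu>' = "simplex_map (p - Suc 0) g"
  let ?D = "(\<lambda>(f,k). singular_face p k f) ` (?C \<times> {..p})"
  have finD: "finite ?D" using fin by auto
  show ?thesis
  proof
    fix g0
    have sub: "{f'. kchain_map p g c f' \<noteq> 0} \<subseteq> ?\<mu> ` ?C"
    proof
      fix f' assume "f' \<in> {f'. kchain_map p g c f' \<noteq> 0}"
      then have "{f. c f \<noteq> 0 \<and> simplex_map p g f = f'} \<noteq> {}"
        by (auto simp: kchain_map_def elim!: sum.not_neutral_contains_not_neutral)
      then show "f' \<in> ?\<mu> ` ?C" by auto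
    qed
    have "kboundary p (kchain_map p g c) g0
       = (\<Sum>f'\<in>?\<mu> ` ?C. \<Sum>k\<le>p. if singular_face p k f' = g0 then (-1) ^ k * kchain_map p g c f' else 0)"
      using kboundary_superset[OF _ sub] fin False by simp
    also have "\<dots> = (\<Sum>f'\<in>?\<mu> ` ?C. \<Sum>f\<in>{x\<in>?C. ?\<mu> x = f'}.
                 \<Sum>k\<le>p. if singular_face p k (?\<mu> f) = g0 then (-1) ^ k * c f else 0)"
    proof (rule sum.cong[OF refl])
      fix f' assume "f' \<in> ?\<mu> ` ?C"
      have "(\<Sum>k\<le>p. if singular_face p k f' = g0 then (-1) ^ k * kchain_map p g c f' else 0)
          = (\<Sum>k\<le>p. \<Sum>f\<in>{x\<in>?C. ?\<mu> x = f'}. if singular_face p k f' = g0 then (-1) ^ k * c f else 0)"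
        by (auto simp: kchain_map_def sum_distrib_left intro!: sum.cong)
      also have "\<dots> = (\<Sum>f\<in>{x\<in>?C. ?\<mu> x = f'}. \<Sum>k\<le>p. if singular_face p k f' = g0 then (-1) ^ k * c f else 0)"
        by (rule sum.swap)
      also have "\<dots> = (\<Sum>f\<in>{x\<in>?C. ?\<mu> x = f'}. \<Sum>k\<le>p. if singular_face p k (?\<mu> f) = g0 then (-1) ^ k * c f else 0)"
        by (rule sum.cong) auto
      finally show "(\<Sum>k\<le>p. if singular_face p k f' = g0 then (-1) ^ k * kchain_map p g c f' else 0) = \<dots>" .
    qed
    also have "\<dots> = (\<Sum>f\<in>?C. \<Sum>k\<le>p. if singular_face p k (?\<mu> f) = g0 then (-1) ^ k * c f else 0)"
      by (rule sum.image_gen[OF fin, symmetric])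
    also have "\<dots> = (\<Sum>f\<in>?C. \<Sum>k\<le>p. if ?\<mu>' (singular_face p k f) = g0 then (-1) ^ k * c f else 0)"
      using False by (intro sum.cong refl) (simp add: face_map)
    also have "\<dots> = (\<Sum>f\<in>?C. \<Sum>k\<le>p. \<Sum>h\<in>{h\<in>?D. ?\<mu>' h = g0}. if singular_face p k f = h then (-1) ^ k * c f else 0)"
    proof (intro sum.cong refl)
      fix f k assume "f \<in> ?C" "k \<in> {..p}"
      then have "singular_face p k f \<in> ?D" by auto
      then show "(if ?\<mu>' (singular_face p k f) = g0 then (-1) ^ k * c f else 0)
         = (\<Sum>h\<in>{h\<in>?D. ?\<mu>' h = g0}. if singular_face p k f = h then (-1) ^ k * c f else 0)"
        using finD by (simp add: sum.delta)
    qed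
    also have "\<dots> = (\<Sum>h\<in>{h\<in>?D. ?\<mu>' h = g0}. \<Sum>f\<in>?C. \<Sum>k\<le>p. if singular_face p k f = h then (-1) ^ k * c f else 0)"
      apply (subst sum.swap)
      by (rule sum.swap)
    also have "\<dots> = (\<Sum>h\<in>{h\<in>?D. ?\<mu>' h = g0}. kboundary p c h)"
      using False by (simp add: kboundary_def)
    also have "\<dots> = (\<Sum>h\<in>{h. kboundary p c h \<noteq> 0 \<and> ?\<mu>' h = g0}. kboundary p c h)"
    proof (rule sum.mono_neutral_right)
      show "finite {h\<in>?D. ?\<mu>' h = g0}" using finD by auto
      show "{h. kboundary p c h \<noteq> 0 \<and> ?\<mu>' h = g0} \<subseteq> {h\<in>?D. ?\<mu>' h = g0}"
      proof
        fix h assume hh: "h \<in> {h. kboundary p c h \<noteq> 0 \<and> ?\<mu>' h = g0}"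
        then have "kboundary p c h \<noteq> 0" by simp
        then have "(\<Sum>f\<in>?C. \<Sum>k\<le>p. if singular_face p k f = h then (-1) ^ k * c f else 0) \<noteq> 0"
          using False by (simp add: kboundary_def)
        then obtain f where f: "f \<in> ?C" and "(\<Sum>k\<le>p. if singular_face p k f = h then (-1) ^ k * c f else 0) \<noteq> 0"
          by (rule sum.not_neutral_contains_not_neutral)
        then obtain k where "k \<le> p" "singular_face p k f = h"
          by (auto elim!: sum.not_neutral_contains_not_neutral split: if_splits)
        with f hh show "h \<in> {h\<in>?D. ?\<mu>' h = g0}" by force
      qed
    qed auto
    also have "\<dots> = kchain_map (p - Suc 0) g (kboundary p c) g0"
      by (simp add: kchain_map_def)
    finally show "kboundary p (kchain_map p g c) g0 = kchain_map (p - Suc 0) g (kboundary p c) g0" .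
  qed
qed


lemma kchain_map_zero: "kchain_map q g (\<lambda>_. 0) = (\<lambda>_. 0)"
  by (simp add: kchain_map_def)

lemma cycle_map:
  assumes "continuous_map X Y g" "z \<in> kcycles p X"
  shows "kchain_map p g z \<in> kcycles p Y"
proof -
  have k: "kchain p X z" and b: "kboundary p z = (\<lambda>_. 0)" using assms(2) by (auto simp: kcycles_def)
  have "kboundary p (kchain_map p g z) = (\<lambda>_. 0)"
    using kchain_map_boundary[OF kchain_finite[OF k], of p g] b by (simp add: kchain_map_zero)
  then show ?thesis using kchain_map_kchain[OF assms(1) k] by (simp add: kcycles_def)
qed

lemma cont_proj:
  assumes "continuous_on UNIV \<pi>"
  shows "continuous_map (top_of_set A) (top_of_set (\<pi> ` A)) \<pi>"
  using assms by (auto simp: continuous_map_in_subtopology intro: continuous_on_subset)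

lemma hi_add: "homology_iso p X W \<phi> \<Longrightarrow> a \<in> kcycles p X \<Longrightarrow> b \<in> kcycles p X \<Longrightarrow>
   \<phi> (\<lambda>f. a f + b f) = (\<lambda>bd i. \<phi> a bd i + \<phi> b bd i)"
  by (simp add: homology_iso_def)
lemma hi_scale: "homology_iso p X W \<phi> \<Longrightarrow> a \<in> kcycles p X \<Longrightarrow>
   \<phi> (\<lambda>f. c * a f) = (\<lambda>bd i. c * \<phi> a bd i)"
  by (simp add: homology_iso_def)
lemma hi_img: "homology_iso p X W \<phi> \<Longrightarrow> a \<in> kcycles p X \<Longrightarrow> \<phi> a \<in> W"
  by (auto simp: homology_iso_def)
lemma hi_surj: "homology_iso p X W \<phi> \<Longrightarrow> v \<in> W \<Longrightarrow> \<exists>a\<in>kcycles p X. \<phi> a = v"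
  by (auto simp: homology_iso_def)
lemma hi_ker: "homology_iso p X W \<phi> \<Longrightarrow> a \<in> kcycles p X \<Longrightarrow> \<phi> a = (\<lambda>_ _. 0) \<longleftrightarrow> a \<in> kbounds p X"
  by (auto simp: homology_iso_def)

lemma kill:
  fixes \<pi> :: "'b::topological_space \<Rightarrow> 'c::topological_space"
  assumes hA: "homology_iso p (top_of_set (\<pi> ` A)) W e"
    and hB: "homology_iso p (top_of_set (\<pi> ` B)) W' e'"
    and AB: "A \<subseteq> B" and w: "w \<in> kcycles p (top_of_set A)"
    and e0: "e (kchain_map p \<pi> w) = (\<lambda>_ _. (0::'k::field))"
    and cont: "continuous_on UNIV \<pi>"
  shows "e' (kchain_map p \<pi> w) = (\<lambda>_ _. 0)"
proof -
  let ?c = "kchain_map p \<pi> w"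
  have cA: "?c \<in> kcycles p (top_of_set (\<pi> ` A))"
    by (rule cycle_map[OF cont_proj[OF cont] w])
  have sub: "\<pi> ` A \<subseteq> \<pi> ` B" using AB by auto
  have "?c \<in> kbounds p (top_of_set (\<pi> ` A))" using hi_ker[OF hA cA] e0 by simp
  then have "?c \<in> kbounds p (top_of_set (\<pi> ` B))" using kbounds_mono[OF sub] by blast
  moreover have "?c \<in> kcycles p (top_of_set (\<pi> ` B))" using kcycles_mono[OF sub] cA by blast
  ultimately show ?thesis using hi_ker[OF hB] by blast
qed

lemma kill3:
  assumes QA: "quiver_decomp p A m e1 e2 e3" and QB: "quiver_decomp p B m' e1' e2' e3'"
    and AB: "A \<subseteq> B" and w: "w \<in> kcycles p (top_of_set A)"
    and w0: "intmap 2 3 (e2 w) = (\<lambda>_ _. (0::'k::field))"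
  shows "e2' w (1,3) = (\<lambda>_. 0)"
proof -
  have "e3 (kchain_map p snd w) = (\<lambda>_ _. 0)" using QA w w0 by (simp add: quiver_decomp_def)
  moreover have "homology_iso p (top_of_set (snd ` A)) (DSum m 3) e3"
    "homology_iso p (top_of_set (snd ` B)) (DSum m' 3) e3'" using QA QB by (auto simp: quiver_decomp_def)
  moreover have "continuous_on UNIV (snd :: 'a \<times> 'a \<Rightarrow> 'a)" by (intro continuous_intros)
  ultimately have "e3' (kchain_map p snd w) = (\<lambda>_ _. 0)"
    using kill[of p snd A _ e3 B _ e3' w] AB w by blast
  moreover have wB: "w \<in> kcycles p (top_of_set B)" using kcycles_mono[OF AB] w by blast
  ultimately have "intmap 2 3 (e2' w) = (\<lambda>_ _. 0)" using QB by (simp add: quiver_decomp_def)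
  then have "intmap 2 3 (e2' w) (1,3) i = 0" for i by simp
  then show ?thesis by (auto simp: intmap_def in_interval_def fun_eq_iff)
qed


lemma kill1:
  assumes QA: "quiver_decomp p A m e1 e2 e3" and QB: "quiver_decomp p B m' e1' e2' e3'"
    and AB: "A \<subseteq> B" and w: "w \<in> kcycles p (top_of_set A)"
    and w0: "intmap 2 1 (e2 w) = (\<lambda>_ _. (0::'k::field))"
  shows "e2' w (1,3) = (\<lambda>_. 0)"
proof -
  have "e1 (kchain_map p fst w) = (\<lambda>_ _. 0)" using QA w w0 by (simp add: quiver_decomp_def)
  moreover have "homology_iso p (top_of_set (fst ` A)) (DSum m 1) e1"
    "homology_iso p (top_of_set (fst ` B)) (DSum m' 1) e1'" using QA QB by (auto simp: quiver_decomp_def)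
  moreover have "continuous_on UNIV (fst :: 'a \<times> 'a \<Rightarrow> 'a)" by (intro continuous_intros)
  ultimately have "e1' (kchain_map p fst w) = (\<lambda>_ _. 0)"
    using kill[of p fst A _ e1 B _ e1' w] AB w by blast
  moreover have wB: "w \<in> kcycles p (top_of_set B)" using kcycles_mono[OF AB] w by blast
  ultimately have "intmap 2 1 (e2' w) = (\<lambda>_ _. 0)" using QB by (simp add: quiver_decomp_def)
  then have "intmap 2 1 (e2' w) (1,3) i = 0" for i by simp
  then show ?thesis by (auto simp: intmap_def in_interval_def fun_eq_iff)
qed

lemma Kvec_zero: "(\<lambda>_. 0) \<in> Kvec n" by (simp add: Kvec_def)

lemma in_interval2: "in_interval 2 bd \<Longrightarrow> bd = (1,2) \<or> bd = (1,3) \<or> bd = (2,2) \<or> bd = (2,3)"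
  by (cases bd) (auto simp: in_interval_def)

lemma DSum_single:
  assumes "v \<in> DSum m k"
  shows "(\<lambda>b. if b = bd then v bd else (\<lambda>_. 0)) \<in> DSum m k"
  using assms by (auto simp: DSum_def Kvec_zero)

lemma DSum2_out:
  assumes "v \<in> DSum m 2" "\<not> in_interval 2 bd"
  shows "v bd i = 0"
  using assms unfolding DSum_def Kvec_def intdim_def by (cases bd) auto

lemma claim:
  assumes QA: "quiver_decomp p A m e1 e2 e3" and QB: "quiver_decomp p B m' e1' e2' e3'"
    and AB: "A \<subseteq> B" and z: "z \<in> kcycles p (top_of_set A)"
    and z0: "e2 z (1,3) = (\<lambda>_. (0::'k::field))"
  shows "e2' z (1,3) = (\<lambda>_. 0)"
proof -
  have hA: "homology_iso p (top_of_set A) (DSum m 2) e2" using QA by (simp add: quiver_decomp_def)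
  have hB: "homology_iso p (top_of_set B) (DSum m' 2) e2'" using QB by (simp add: quiver_decomp_def)
  define v where "v = e2 z"
  have v: "v \<in> DSum m 2" using hi_img[OF hA z] v_def by simp
  define vv where "vv bd = (\<lambda>b. if b = bd then v bd else (\<lambda>_. 0))" for bd
  have "\<exists>a\<in>kcycles p (top_of_set A). e2 a = vv bd" for bd
    using hi_surj[OF hA DSum_single[OF v]] vv_def by simp
  then obtain zz where zz: "\<And>bd. zz bd \<in> kcycles p (top_of_set A)" "\<And>bd. e2 (zz bd) = vv bd"
    by metis
  define r where "r = (\<lambda>f. z f + ((-1) * zz (1,2) f + ((-1) * zz (2,2) f + (-1) * zz (2,3) f)))"
  have rA: "r \<in> kcycles p (top_of_set A)"
    unfolding r_def by (intro kcycles_add kcycles_scale z zz)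
  have c1: "(\<lambda>f. (-1) * zz bd f) \<in> kcycles p (top_of_set A)" for bd by (intro kcycles_scale zz)
  have c2: "(\<lambda>f. (-1) * zz (2,2) f + (-1) * zz (2,3) f) \<in> kcycles p (top_of_set A)"
    by (intro kcycles_add c1)
  have c3: "(\<lambda>f. (-1) * zz (1,2) f + ((-1) * zz (2,2) f + (-1) * zz (2,3) f)) \<in> kcycles p (top_of_set A)"
    by (intro kcycles_add c1 c2)
  have "e2 r = (\<lambda>bd i. v bd i + ((-1) * vv (1,2) bd i + ((-1) * vv (2,2) bd i + (-1) * vv (2,3) bd i)))"
    unfolding r_def
    by (simp only: hi_add[OF hA z c3] hi_add[OF hA c1 c2] hi_add[OF hA c1 c1] hi_scale[OF hA zz(1)] zz(2) v_def)
  also have "\<dots> = (\<lambda>_ _. 0)"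
  proof (intro ext)
    fix bd i
    show "v bd i + ((-1) * vv (1,2) bd i + ((-1) * vv (2,2) bd i + (-1) * vv (2,3) bd i)) = 0"
    proof (cases "in_interval 2 bd")
      case True
      then show ?thesis using in_interval2[OF True] z0 v_def by (auto simp: vv_def)
    next
      case False
      then have "bd \<noteq> (1,2)" "bd \<noteq> (2,2)" "bd \<noteq> (2,3)" by (auto simp: in_interval_def)
      then show ?thesis using DSum2_out[OF v False] by (simp add: vv_def)
    qed
  qed
  finally have "r \<in> kbounds p (top_of_set A)" using hi_ker[OF hA rA] by simp
  then have rbB: "r \<in> kbounds p (top_of_set B)" using kbounds_mono[OF AB] by blast
  have cyB: "\<And>x. x \<in> kcycles p (top_of_set A) \<Longrightarrow> x \<in> kcycles p (top_of_set B)"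
    using kcycles_mono[OF AB] by blast
  have E1: "e2' r = (\<lambda>_ _. 0)" using hi_ker[OF hB cyB[OF rA]] rbB by simp
   have E2: "e2' r = (\<lambda>bd i. e2' z bd i + ((-1) * e2' (zz (1,2)) bd i + ((-1) * e2' (zz (2,2)) bd i + (-1) * e2' (zz (2,3)) bd i)))"
    unfolding r_def
    by (simp only: hi_add[OF hB cyB[OF z] cyB[OF c3]] hi_add[OF hB cyB[OF c1] cyB[OF c2]]
        hi_add[OF hB cyB[OF c1] cyB[OF c1]] hi_scale[OF hB cyB[OF zz(1)]])
  have K1: "e2' (zz (1,2)) (1,3) = (\<lambda>_. 0)"
    by (rule kill3[OF QA QB AB zz(1)]) (auto simp: zz(2) vv_def intmap_def in_interval_def fun_eq_iff)
  have K2: "e2' (zz (2,2)) (1,3) = (\<lambda>_. 0)"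
    by (rule kill3[OF QA QB AB zz(1)]) (auto simp: zz(2) vv_def intmap_def in_interval_def fun_eq_iff)
  have K3: "e2' (zz (2,3)) (1,3) = (\<lambda>_. 0)"
    by (rule kill1[OF QA QB AB zz(1)]) (auto simp: zz(2) vv_def intmap_def in_interval_def fun_eq_iff)
  have "e2' z (1,3) i = 0" for i
  proof -
    have "e2' r (1,3) i = 0" using E1 by simp
    moreover have "e2' r (1,3) i = e2' z (1,3) i + ((-1) * e2' (zz (1,2)) (1,3) i + ((-1) * e2' (zz (2,2)) (1,3) i + (-1) * e2' (zz (2,3)) (1,3) i))"
      by (subst E2) (rule refl)
    moreover have "e2' (zz (1,2)) (1,3) i = 0" "e2' (zz (2,2)) (1,3) i = 0" "e2' (zz (2,3)) (1,3) i = 0"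
      using K1 K2 K3 by simp_all
    ultimately show ?thesis by simp
  qed
  then show ?thesis by (simp add: fun_eq_iff)
qed

lemma inv13:
  assumes QA: "quiver_decomp p A m e1 e2 e3" and QB: "quiver_decomp p B m' e1' e2' e3'"
    and AB: "A \<subseteq> B" and z1: "z1 \<in> kcycles p (top_of_set A)" and z2: "z2 \<in> kcycles p (top_of_set A)"
    and eq: "e2 z1 (1,3) = (e2 z2 (1,3) :: nat \<Rightarrow> 'k::field)"
  shows "e2' z1 (1,3) = e2' z2 (1,3)"
proof -
  have hA: "homology_iso p (top_of_set A) (DSum m 2) e2" using QA by (simp add: quiver_decomp_def)
  have hB: "homology_iso p (top_of_set B) (DSum m' 2) e2'" using QB by (simp add: quiver_decomp_def)
  have cyB: "\<And>x. x \<in> kcycles p (top_of_set A) \<Longrightarrow> x \<in> kcycles p (top_of_set B)"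
    using kcycles_mono[OF AB] by blast
  have c1: "(\<lambda>f. (-1) * z2 f) \<in> kcycles p (top_of_set A)" by (intro kcycles_scale z2)
  define d where "d = (\<lambda>f. z1 f + (-1) * z2 f)"
  have dA: "d \<in> kcycles p (top_of_set A)" unfolding d_def by (intro kcycles_add z1 c1)
  have "e2 d (1,3) = (\<lambda>_. 0)"
    unfolding d_def by (simp only: hi_add[OF hA z1 c1] hi_scale[OF hA z2] eq) simp
  then have "e2' d (1,3) = (\<lambda>_. 0)" by (rule claim[OF QA QB AB dA])
  then show ?thesis
    unfolding d_def by (simp only: hi_add[OF hB cyB[OF z1] cyB[OF c1]] hi_scale[OF hB cyB[OF z2]]) (simp add: fun_eq_iff)
qed


definition pm_good where
  "pm_good p F m e1 e2 e3 M \<longleftrightarrow>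
    (\<forall>r. quiver_decomp p (F r) (m r) (e1 r) (e2 r) (e3 r))
     \<and> (\<forall>r. fst M r = m r (1, 3))
     \<and> (\<forall>s r. s \<le> r \<longrightarrow> klinear (fst M s) (fst M r) (snd M s r)
          \<and> (\<forall>x\<in>Kvec (fst M s). \<forall>z\<in>kcycles p (subtopology euclidean (F s)).
                e2 s z = summand13 x \<longrightarrow> snd M s r x = e2 r z (1, 3)))"

definition Zc where
  "Zc p F e2 t x = (SOME z. z \<in> kcycles p (top_of_set (F t)) \<and> e2 t z = summand13 x)"

definition trans where
  "trans p \<delta> F e2 e2' t x = e2' (t + \<delta>) (Zc p F e2 t x) (1,3)"

lemma pm_Q: "pm_good p F m e1 e2 e3 M \<Longrightarrow> quiver_decomp p (F r) (m r) (e1 r) (e2 r) (e3 r)"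
  by (simp add: pm_good_def)

lemma pm_H: "pm_good p F m e1 e2 e3 M \<Longrightarrow> homology_iso p (top_of_set (F r)) (DSum (m r) 2) (e2 r)"
  by (simp add: pm_good_def quiver_decomp_def)

lemma pm_TR: "pm_good p F m e1 e2 e3 M \<Longrightarrow> s \<le> r \<Longrightarrow> x \<in> Kvec (fst M s) \<Longrightarrow>
   z \<in> kcycles p (top_of_set (F s)) \<Longrightarrow> e2 s z = summand13 x \<Longrightarrow> snd M s r x = e2 r z (1, 3)"
  by (simp add: pm_good_def)

lemma pm_K: "pm_good p F m e1 e2 e3 M \<Longrightarrow> z \<in> kcycles p (top_of_set (F t)) \<Longrightarrow> e2 t z (1,3) \<in> Kvec (fst M t)"
proof -
  assume g: "pm_good p F m e1 e2 e3 M" and z: "z \<in> kcycles p (top_of_set (F t))"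
  have "e2 t z \<in> DSum (m t) 2" by (rule hi_img[OF pm_H[OF g] z])
  then have "e2 t z (1,3) \<in> Kvec (intdim (m t) 2 (1,3))" by (simp add: DSum_def)
  moreover have "intdim (m t) 2 (1,3) = fst M t" using g by (simp add: pm_good_def intdim_def in_interval_def)
  ultimately show ?thesis by simp
qed

lemma pm_Z:
  assumes g: "pm_good p F m e1 e2 e3 M" and x: "x \<in> Kvec (fst M t)"
  shows "Zc p F e2 t x \<in> kcycles p (top_of_set (F t)) \<and> e2 t (Zc p F e2 t x) = summand13 x"
proof -
  have "summand13 x \<in> DSum (m t) 2"
    using x g by (auto simp: pm_good_def summand13_def DSum_def intdim_def in_interval_def Kvec_zero)
  then have "\<exists>z. z \<in> kcycles p (top_of_set (F t)) \<and> e2 t z = summand13 x"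
    using hi_surj[OF pm_H[OF g]] by blast
  then show ?thesis unfolding Zc_def by (rule someI_ex)
qed

lemma summand13_13: "summand13 x (1,3) = x" "summand13 x (Suc 0,3) = x" by (simp_all add: summand13_def)

lemma Kvec_add: "x \<in> Kvec n \<Longrightarrow> y \<in> Kvec n \<Longrightarrow> (\<lambda>i. x i + y i) \<in> Kvec n"
  by (simp add: Kvec_def)
lemma Kvec_scale: "x \<in> Kvec n \<Longrightarrow> (\<lambda>i. c * x i) \<in> Kvec n"
  by (simp add: Kvec_def)

lemma morph:
  fixes M N :: "'k::field pmod" and \<delta> :: real
  assumes gF: "pm_good p F m e1 e2 e3 M" and gG: "pm_good p G n d1 d2 d3 N"
    and monoF: "\<And>s t. s \<le> t \<Longrightarrow> F s \<subseteq> F t" and monoG: "\<And>s t. s \<le> t \<Longrightarrow> G s \<subseteq> G t"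
    and FG: "\<And>t. F t \<subseteq> G (t + \<delta>)"
  shows "pmod_morph \<delta> M N (trans p \<delta> F e2 d2)"
proof -
  note Z = pm_Z[OF gF]
  have cyFG: "\<And>t z. z \<in> kcycles p (top_of_set (F t)) \<Longrightarrow> z \<in> kcycles p (top_of_set (G (t + \<delta>)))"
    using kcycles_mono[OF FG] by blast
  have inv: "\<And>t z1 z2. z1 \<in> kcycles p (top_of_set (F t)) \<Longrightarrow> z2 \<in> kcycles p (top_of_set (F t)) \<Longrightarrow>
      e2 t z1 (1,3) = e2 t z2 (1,3) \<Longrightarrow> d2 (t + \<delta>) z1 (1,3) = d2 (t + \<delta>) z2 (1,3)"
    by (rule inv13[OF pm_Q[OF gF] pm_Q[OF gG] FG])
  have lin: "klinear (fst M t) (fst N (t + \<delta>)) (trans p \<delta> F e2 d2 t)" for t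
    unfolding klinear_def
  proof (intro conjI ballI allI)
    fix x :: "nat \<Rightarrow> 'k" assume x: "x \<in> Kvec (fst M t)"
    show "trans p \<delta> F e2 d2 t x \<in> Kvec (fst N (t + \<delta>))"
      unfolding trans_def by (rule pm_K[OF gG cyFG]) (use Z[OF x] in blast)
  next
    fix x y :: "nat \<Rightarrow> 'k" assume x: "x \<in> Kvec (fst M t)" and y: "y \<in> Kvec (fst M t)"
    have xy: "(\<lambda>i. x i + y i) \<in> Kvec (fst M t)" by (rule Kvec_add[OF x y])
    let ?w = "\<lambda>f. Zc p F e2 t x f + Zc p F e2 t y f"
    have w: "?w \<in> kcycles p (top_of_set (F t))" using Z[OF x] Z[OF y] by (intro kcycles_add) auto
    have "e2 t ?w (1,3) = (\<lambda>i. x i + y i)"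
      using hi_add[OF pm_H[OF gF], of "Zc p F e2 t x" t "Zc p F e2 t y"] Z[OF x] Z[OF y]
      by (simp add: summand13_13)
    then have "d2 (t + \<delta>) (Zc p F e2 t (\<lambda>i. x i + y i)) (1,3) = d2 (t + \<delta>) ?w (1,3)"
      using Z[OF xy] w by (intro inv) (auto simp: summand13_13)
    also have "\<dots> = (\<lambda>i. d2 (t + \<delta>) (Zc p F e2 t x) (1,3) i + d2 (t + \<delta>) (Zc p F e2 t y) (1,3) i)"
      using hi_add[OF pm_H[OF gG] cyFG[OF conjunct1[OF Z[OF x]]] cyFG[OF conjunct1[OF Z[OF y]]]]
      by simp
    finally show "trans p \<delta> F e2 d2 t (\<lambda>i. x i + y i) =
        (\<lambda>i. trans p \<delta> F e2 d2 t x i + trans p \<delta> F e2 d2 t y i)"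
      by (simp add: trans_def)
  next
    fix c :: 'k and x :: "nat \<Rightarrow> 'k" assume x: "x \<in> Kvec (fst M t)"
    have cx: "(\<lambda>i. c * x i) \<in> Kvec (fst M t)" by (rule Kvec_scale[OF x])
    let ?w = "\<lambda>f. c * Zc p F e2 t x f"
    have w: "?w \<in> kcycles p (top_of_set (F t))" using Z[OF x] by (intro kcycles_scale) auto
    have "e2 t ?w (1,3) = (\<lambda>i. c * x i)"
      using hi_scale[OF pm_H[OF gF], of "Zc p F e2 t x" t c] Z[OF x]
      by (simp add: summand13_13)
    then have "d2 (t + \<delta>) (Zc p F e2 t (\<lambda>i. c * x i)) (1,3) = d2 (t + \<delta>) ?w (1,3)"
      using Z[OF cx] w by (intro inv) (auto simp: summand13_13)
    also have "\<dots> = (\<lambda>i. c * d2 (t + \<delta>) (Zc p F e2 t x) (1,3) i)"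
      using hi_scale[OF pm_H[OF gG] cyFG[OF conjunct1[OF Z[OF x]]]]
      by simp
    finally show "trans p \<delta> F e2 d2 t (\<lambda>i. c * x i) = (\<lambda>i. c * trans p \<delta> F e2 d2 t x i)"
      by (simp add: trans_def)
  qed
  have nat: "snd N (s + \<delta>) (t + \<delta>) (trans p \<delta> F e2 d2 s x) = trans p \<delta> F e2 d2 t (snd M s t x)"
    if st: "s \<le> t" and x: "x \<in> Kvec (fst M s)" for s t x
  proof -
    define z where "z = Zc p F e2 s x"
    have z: "z \<in> kcycles p (top_of_set (F s))" "e2 s z = summand13 x" using Z[OF x] z_def by auto
    define y where "y = d2 (s + \<delta>) z (1,3)"
    have zG: "z \<in> kcycles p (top_of_set (G (s + \<delta>)))" using cyFG z by blast
    have y: "y \<in> Kvec (fst N (s + \<delta>))" unfolding y_def by (rule pm_K[OF gG zG])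
    define w where "w = Zc p G d2 (s + \<delta>) y"
    have w: "w \<in> kcycles p (top_of_set (G (s + \<delta>)))" "d2 (s + \<delta>) w = summand13 y"
      using pm_Z[OF gG y] w_def by auto
    have "snd N (s + \<delta>) (t + \<delta>) y = d2 (t + \<delta>) w (1,3)"
      by (rule pm_TR[OF gG _ y w]) (use st in simp)
    also have "\<dots> = d2 (t + \<delta>) z (1,3)"
      by (rule inv13[OF pm_Q[OF gG] pm_Q[OF gG] monoG w(1) zG]) (use st w y_def in \<open>auto simp: summand13_13\<close>)
    finally have L: "snd N (s + \<delta>) (t + \<delta>) y = d2 (t + \<delta>) z (1,3)" .
    define u where "u = e2 t z (1,3)"
    have uu: "snd M s t x = u" unfolding u_def by (rule pm_TR[OF gF st x z])
    have zt: "z \<in> kcycles p (top_of_set (F t))" using kcycles_mono[OF monoF[OF st]] z by blast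
    have u: "u \<in> Kvec (fst M t)" unfolding u_def by (rule pm_K[OF gF zt])
    have "trans p \<delta> F e2 d2 t u = d2 (t + \<delta>) (Zc p F e2 t u) (1,3)" by (simp add: trans_def)
    also have "\<dots> = d2 (t + \<delta>) z (1,3)"
      by (rule inv) (use Z[OF u] zt u_def in \<open>auto simp: summand13_13\<close>)
    finally show ?thesis using L uu by (simp add: trans_def y_def z_def)
  qed
  show ?thesis unfolding pmod_morph_def using lin nat by blast
qed

lemma comp:
  fixes M N :: "'k::field pmod" and \<delta> t :: real
  assumes gF: "pm_good p F m e1 e2 e3 M" and gG: "pm_good p G n d1 d2 d3 N"
    and FG: "\<And>t. F t \<subseteq> G (t + \<delta>)" and GF: "\<And>t. G t \<subseteq> F (t + \<delta>)" and d0: "0 \<le> \<delta>"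
    and x: "x \<in> Kvec (fst M t)"
  shows "trans p \<delta> G d2 e2 (t + \<delta>) (trans p \<delta> F e2 d2 t x) = snd M t (t + 2 * \<delta>) x"
proof -
  define z where "z = Zc p F e2 t x"
  have z: "z \<in> kcycles p (top_of_set (F t))" "e2 t z = summand13 x" using pm_Z[OF gF x] z_def by auto
  have zG: "z \<in> kcycles p (top_of_set (G (t + \<delta>)))" using kcycles_mono[OF FG] z by blast
  define y where "y = d2 (t + \<delta>) z (1,3)"
  have y: "y \<in> Kvec (fst N (t + \<delta>))" unfolding y_def by (rule pm_K[OF gG zG])
  define w where "w = Zc p G d2 (t + \<delta>) y"
  have w: "w \<in> kcycles p (top_of_set (G (t + \<delta>)))" "d2 (t + \<delta>) w = summand13 y"
    using pm_Z[OF gG y] w_def by auto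
  have "trans p \<delta> G d2 e2 (t + \<delta>) y = e2 (t + \<delta> + \<delta>) w (1,3)" unfolding trans_def w_def ..
  also have "\<dots> = e2 (t + \<delta> + \<delta>) z (1,3)"
    by (rule inv13[OF pm_Q[OF gG] pm_Q[OF gF] GF w(1) zG]) (use w y_def in \<open>auto simp: summand13_13\<close>)
  also have "t + \<delta> + \<delta> = t + 2 * \<delta>" by simp
  also have "e2 (t + 2 * \<delta>) z (1,3) = snd M t (t + 2 * \<delta>) x"
    using pm_TR[OF gF _ x z, of "t + 2 * \<delta>"] d0 by simp
  finally have "trans p \<delta> G d2 e2 (t + \<delta>) y = snd M t (t + 2 * \<delta>) x" .
  moreover have "trans p \<delta> F e2 d2 t x = y" unfolding trans_def y_def z_def ..
  ultimately show ?thesis by simp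
qed

lemma interleave:
  assumes gF: "pm_good p F m e1 e2 e3 M" and gG: "pm_good p G n d1 d2 d3 N"
    and monoF: "\<And>s t. s \<le> t \<Longrightarrow> F s \<subseteq> F t" and monoG: "\<And>s t. s \<le> t \<Longrightarrow> G s \<subseteq> G t"
    and FG: "\<And>t. F t \<subseteq> G (t + \<delta>)" and GF: "\<And>t. G t \<subseteq> F (t + \<delta>)" and d0: "0 \<le> \<delta>"
  shows "interleaved \<delta> M N"
  unfolding interleaved_def
  using morph[OF gF gG monoF monoG FG] morph[OF gG gF monoG monoF GF]
    comp[OF gF gG FG GF d0] comp[OF gG gF GF FG d0] by blast



lemma linf_le_iff: "linf_dist x y \<le> c \<longleftrightarrow> (\<forall>i. \<bar>x $ i - y $ i\<bar> \<le> c)"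
  unfolding linf_dist_def by (subst Max_le_iff) auto

lemma linf_ge: "\<bar>x $ i - y $ i\<bar> \<le> linf_dist x y"
  unfolding linf_dist_def by (rule Max_ge) auto

lemma linf_nonneg: "0 \<le> linf_dist x y"
  using linf_ge[of x _ y] by (meson abs_ge_zero order_trans)

lemma linf_tri: "linf_dist x z \<le> linf_dist x y + linf_dist y z"
  unfolding linf_le_iff[of x z]
proof
  fix i
  have "\<bar>x $ i - z $ i\<bar> \<le> \<bar>x $ i - y $ i\<bar> + \<bar>y $ i - z $ i\<bar>" by simp
  also have "\<dots> \<le> linf_dist x y + linf_dist y z" by (intro add_mono linf_ge)
  finally show "\<bar>x $ i - z $ i\<bar> \<le> linf_dist x y + linf_dist y z" .
qed

lemma linf_sym: "linf_dist x y = linf_dist y x"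
  unfolding linf_dist_def by (simp add: abs_minus_commute)

lemma linf2_sym: "linf_dist2 z w = linf_dist2 w z"
  unfolding linf_dist2_def by (simp add: linf_sym)

lemma linf2_nonneg: "0 \<le> linf_dist2 z w"
  unfolding linf_dist2_def by (metis linf_nonneg max.coboundedI1)

lemma linf2_tri: "linf_dist2 x z \<le> linf_dist2 x y + linf_dist2 y z"
  unfolding linf_dist2_def
  using linf_tri[of "fst x" "fst z" "fst y"] linf_tri[of "snd x" "snd z" "snd y"]
  by (auto simp: max_def)

lemma linf2_le_iff: "linf_dist2 z w \<le> c \<longleftrightarrow> linf_dist (fst z) (fst w) \<le> c \<and> linf_dist (snd z) (snd w) \<le> c"
  by (simp add: linf_dist2_def)

lemma coord_step:
  fixes A x w y e :: real
  assumes e: "e > 0" and x: "A \<le> x" "x \<le> A + e" and w: "A \<le> w" "w \<le> A + e" and xy: "\<bar>x - y\<bar> \<le> e"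
  shows "\<exists>k::int. \<exists>w'. A + real_of_int k * e \<le> y \<and> y \<le> A + real_of_int k * e + e
     \<and> A + real_of_int k * e \<le> w' \<and> w' \<le> A + real_of_int k * e + e \<and> \<bar>w - w'\<bar> \<le> e"
proof (cases "y < A")
  case True
  then show ?thesis using assms by (intro exI[of _ "-1"] exI[of _ A]) auto
next
  case False
  show ?thesis
  proof (cases "y > A + e")
    case True
    then show ?thesis using assms by (intro exI[of _ "1"] exI[of _ "A + e"]) auto
  next
    case False
    then show ?thesis using assms \<open>\<not> y < A\<close> by (intro exI[of _ "0"] exI[of _ w]) auto
  qed
qed

lemma cube_step:
  assumes e: "\<epsilon> > 0" and x: "x \<in> grid_cube \<epsilon> a" and w: "w \<in> grid_cube \<epsilon> a" and xy: "linf_dist x y \<le> \<epsilon>"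
  shows "\<exists>a' w'. y \<in> grid_cube \<epsilon> a' \<and> w' \<in> grid_cube \<epsilon> a' \<and> linf_dist w w' \<le> \<epsilon>"
proof -
  have "\<forall>i. \<exists>k::int. \<exists>w'. real_of_int (a i) * \<epsilon> + real_of_int k * \<epsilon> \<le> y $ i
     \<and> y $ i \<le> real_of_int (a i) * \<epsilon> + real_of_int k * \<epsilon> + \<epsilon>
     \<and> real_of_int (a i) * \<epsilon> + real_of_int k * \<epsilon> \<le> w' \<and> w' \<le> real_of_int (a i) * \<epsilon> + real_of_int k * \<epsilon> + \<epsilon>
     \<and> \<bar>w $ i - w'\<bar> \<le> \<epsilon>"
  proof
    fix i
    show "\<exists>k::int. \<exists>w'. real_of_int (a i) * \<epsilon> + real_of_int k * \<epsilon> \<le> y $ i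
     \<and> y $ i \<le> real_of_int (a i) * \<epsilon> + real_of_int k * \<epsilon> + \<epsilon>
     \<and> real_of_int (a i) * \<epsilon> + real_of_int k * \<epsilon> \<le> w' \<and> w' \<le> real_of_int (a i) * \<epsilon> + real_of_int k * \<epsilon> + \<epsilon>
     \<and> \<bar>w $ i - w'\<bar> \<le> \<epsilon>"
      by (rule coord_step[OF e, of _ "x $ i"]) 
         (use x w xy linf_ge[of x i y] in \<open>auto simp: grid_cube_def algebra_simps\<close>)
  qed
  then obtain k wf where kw: "\<And>i. real_of_int (a i) * \<epsilon> + real_of_int (k i) * \<epsilon> \<le> y $ i
     \<and> y $ i \<le> real_of_int (a i) * \<epsilon> + real_of_int (k i) * \<epsilon> + \<epsilon>
     \<and> real_of_int (a i) * \<epsilon> + real_of_int (k i) * \<epsilon> \<le> wf i \<and> wf i \<le> real_of_int (a i) * \<epsilon> + real_of_int (k i) * \<epsilon> + \<epsilon>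
     \<and> \<bar>w $ i - wf i\<bar> \<le> \<epsilon>"
    by metis
  show ?thesis
  proof (intro exI conjI)
    show "y \<in> grid_cube \<epsilon> (\<lambda>i. a i + k i)"
      using kw by (auto simp: grid_cube_def algebra_simps)
    show "(\<chi> i. wf i) \<in> grid_cube \<epsilon> (\<lambda>i. a i + k i)"
      using kw by (auto simp: grid_cube_def algebra_simps)
    show "linf_dist w (\<chi> i. wf i) \<le> \<epsilon>"
      using kw by (auto simp: linf_le_iff)
  qed
qed


lemma graph_finite: "finite S \<Longrightarrow> finite (graph_of S h)"
proof -
  assume "finite S"
  moreover have "graph_of S h = (\<lambda>s. (s, h s)) ` S" by (auto simp: graph_of_def)
  ultimately show ?thesis by simp
qed

lemma cover_step:
  assumes e: "\<epsilon> > 0" and fin: "finite S'"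
    and H: "\<forall>a\<in>graph_of S h. (INF b\<in>graph_of S' h'. ereal (linf_dist2 a b)) \<le> ereal \<epsilon>"
    and w: "w \<in> grid_cover \<epsilon> S h"
  shows "\<exists>w'\<in>grid_cover \<epsilon> S' h'. linf_dist2 w w' \<le> \<epsilon>"
proof -
  obtain a b where wab: "w \<in> grid_cube \<epsilon> a \<times> grid_cube \<epsilon> b"
    and ne: "(grid_cube \<epsilon> a \<times> grid_cube \<epsilon> b) \<inter> graph_of S h \<noteq> {}"
    using w unfolding grid_cover_def by blast
  then obtain s where s: "s \<in> S" "s \<in> grid_cube \<epsilon> a" "h s \<in> grid_cube \<epsilon> b"
    by (auto simp: graph_of_def)
  have gs: "(s, h s) \<in> graph_of S h" using s by (auto simp: graph_of_def)
  let ?G = "graph_of S' h'"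
  let ?V = "(\<lambda>b. ereal (linf_dist2 (s, h s) b)) ` ?G"
  have Hs: "Inf ?V \<le> ereal \<epsilon>" using H gs by blast
  have finV: "finite ?V" using graph_finite[OF fin] by simp
  have neV: "?V \<noteq> {}"
  proof
    assume "?V = {}"
    then have "Inf ?V = \<infinity>" by (simp add: top_ereal_def)
    with Hs show False by simp
  qed
  have "Min ?V \<in> ?V" using finV neV by (rule Min_in)
  then obtain g where g: "g \<in> ?G" "ereal (linf_dist2 (s, h s) g) = Inf ?V"
    using Min_Inf[OF finV neV] by auto
  then have "ereal (linf_dist2 (s, h s) g) \<le> ereal \<epsilon>" using Hs by simp
  then have dg: "linf_dist2 (s, h s) g \<le> \<epsilon>" by simp
  from g obtain s' where s': "s' \<in> S'" "g = (s', h' s')" by (auto simp: graph_of_def)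
  have d1: "linf_dist s s' \<le> \<epsilon>" and d2: "linf_dist (h s) (h' s') \<le> \<epsilon>"
    using dg s' by (auto simp: linf2_le_iff)
  obtain a' w1 where a': "s' \<in> grid_cube \<epsilon> a'" "w1 \<in> grid_cube \<epsilon> a'" "linf_dist (fst w) w1 \<le> \<epsilon>"
    using cube_step[OF e s(2) _ d1, of "fst w"] wab by auto
  obtain b' w2 where b': "h' s' \<in> grid_cube \<epsilon> b'" "w2 \<in> grid_cube \<epsilon> b'" "linf_dist (snd w) w2 \<le> \<epsilon>"
    using cube_step[OF e s(3) _ d2, of "snd w"] wab by auto
  have "(w1, w2) \<in> grid_cover \<epsilon> S' h'"
    unfolding grid_cover_def
  proof (rule UnionI)
    show "grid_cube \<epsilon> a' \<times> grid_cube \<epsilon> b' \<in> {grid_cube \<epsilon> a \<times> grid_cube \<epsilon> b |a b.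
             grid_cube \<epsilon> a \<times> grid_cube \<epsilon> b \<inter> graph_of S' h' \<noteq> {}}"
      using a' b' s' by (auto simp: graph_of_def)
    show "(w1, w2) \<in> grid_cube \<epsilon> a' \<times> grid_cube \<epsilon> b'" using a' b' by auto
  qed
  moreover have "linf_dist2 w (w1, w2) \<le> \<epsilon>" using a' b' by (simp add: linf2_le_iff)
  ultimately show ?thesis by blast
qed

lemma thick_mono:
  assumes "i \<le> j" "\<epsilon> > 0"
  shows "grid_thick \<epsilon> S h i \<subseteq> grid_thick \<epsilon> S h j"
proof -
  have "real i * \<epsilon> \<le> real j * \<epsilon>" using assms by (simp add: mult_right_mono)
  then show ?thesis unfolding grid_thick_def using order_trans by fastforce
qed

lemma filt_mono:
  assumes e: "\<epsilon> > 0" and st: "s \<le> t"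
  shows "grid_filt \<epsilon> S h s \<subseteq> grid_filt \<epsilon> S h t"
proof (cases "s < \<epsilon>")
  case True
  then show ?thesis by (simp add: grid_filt_def)
next
  case False
  then have "\<not> t < \<epsilon>" using st by simp
  moreover have "nat \<lfloor>s / \<epsilon>\<rfloor> \<le> nat \<lfloor>t / \<epsilon>\<rfloor>"
    using st e by (intro nat_mono floor_mono divide_right_mono) auto
  ultimately show ?thesis using False thick_mono[OF _ e] by (simp add: grid_filt_def)
qed

lemma thick_shift:
  assumes e: "\<epsilon> > 0" and fin: "finite S'"
    and H: "\<forall>a\<in>graph_of S h. (INF b\<in>graph_of S' h'. ereal (linf_dist2 a b)) \<le> ereal \<epsilon>"
  shows "grid_thick \<epsilon> S h i \<subseteq> grid_thick \<epsilon> S' h' (Suc i)"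
proof
  fix z assume z: "z \<in> grid_thick \<epsilon> S h i"
  let ?C = "grid_cover \<epsilon> S h" and ?C' = "grid_cover \<epsilon> S' h'"
  have D: "(INF w\<in>?C. ereal (linf_dist2 z w)) \<le> ereal (real i * \<epsilon>)"
    using z by (simp add: grid_thick_def)
  have neC: "?C \<noteq> {}"
  proof
    assume "?C = {}"
    then have "(INF w\<in>?C. ereal (linf_dist2 z w)) = \<infinity>" by (simp add: top_ereal_def)
    with D show False by simp
  qed
  have "(INF w'\<in>?C'. ereal (linf_dist2 z w')) \<le> ereal (linf_dist2 z w) + ereal \<epsilon>" if w: "w \<in> ?C" for w
  proof -
    obtain w' where w': "w' \<in> ?C'" "linf_dist2 w w' \<le> \<epsilon>" using cover_step[OF e fin H w] by blast
    have "(INF w'\<in>?C'. ereal (linf_dist2 z w')) \<le> ereal (linf_dist2 z w')" using w'(1) by (rule INF_lower)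
    also have "\<dots> \<le> ereal (linf_dist2 z w + \<epsilon>)"
      using linf2_tri[of z w' w] w'(2) by simp
    finally show ?thesis by simp
  qed
  then have "(INF w'\<in>?C'. ereal (linf_dist2 z w')) \<le> (INF w\<in>?C. ereal (linf_dist2 z w) + ereal \<epsilon>)"
    by (rule INF_greatest)
  also have "\<dots> = (INF w\<in>?C. ereal (linf_dist2 z w)) + ereal \<epsilon>"
    by (rule INF_ereal_add_left[OF neC]) (auto simp: linf2_nonneg)
  also have "\<dots> \<le> ereal (real i * \<epsilon>) + ereal \<epsilon>" using D by (rule add_right_mono)
  also have "\<dots> = ereal (real (Suc i) * \<epsilon>)" by (simp add: algebra_simps)
  finally show "z \<in> grid_thick \<epsilon> S' h' (Suc i)" by (simp add: grid_thick_def)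
qed

lemma filt_shift:
  assumes e: "\<epsilon> > 0" and fin: "finite S'"
    and H: "\<forall>a\<in>graph_of S h. (INF b\<in>graph_of S' h'. ereal (linf_dist2 a b)) \<le> ereal \<epsilon>"
  shows "grid_filt \<epsilon> S h t \<subseteq> grid_filt \<epsilon> S' h' (t + \<epsilon>)"
proof (cases "t < \<epsilon>")
  case True
  then show ?thesis by (simp add: grid_filt_def)
next
  case False
  have q: "(t + \<epsilon>) / \<epsilon> = t / \<epsilon> + 1" using e by (simp add: field_simps)
  have "1 \<le> t / \<epsilon>" using False e by (simp add: field_simps)
  then have f0: "0 \<le> \<lfloor>t / \<epsilon>\<rfloor>" by linarith
  have "nat \<lfloor>(t + \<epsilon>) / \<epsilon>\<rfloor> = Suc (nat \<lfloor>t / \<epsilon>\<rfloor>)" unfolding q using f0 by (simp add: nat_add_distrib)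
  moreover have "\<not> t + \<epsilon> < \<epsilon>" using False e by simp
  ultimately show ?thesis using False thick_shift[OF e fin H] by (simp add: grid_filt_def)
qed


theorem mainTheorem9:
  fixes \<epsilon> :: real
    and S S' :: "(real^'n) set"
    and h h' :: "real^'n \<Rightarrow> real^'n"
    and p :: nat
    and M M' :: "'k::field pmod"
  assumes "\<epsilon> > 0"
    and "finite S" and "finite S'"
    and "is_Mh \<epsilon> S h p M"
    and "is_Mh \<epsilon> S' h' p M'"
    and "hausdorff_linf (graph_of S h) (graph_of S' h') \<le> ereal \<epsilon>"
  shows "interleaving_dist M M' \<le> ereal \<epsilon>"
proof -
  note e = assms(1)
  obtain m e1 e2 e3 where gF: "pm_good p (grid_filt \<epsilon> S h) m e1 e2 e3 M"
    using assms(4) unfolding is_Mh_def pm_good_def by blast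
  obtain n d1 d2 d3 where gG: "pm_good p (grid_filt \<epsilon> S' h') n d1 d2 d3 M'"
    using assms(5) unfolding is_Mh_def pm_good_def by blast
  have H1: "\<forall>a\<in>graph_of S h. (INF b\<in>graph_of S' h'. ereal (linf_dist2 a b)) \<le> ereal \<epsilon>"
    using assms(6) unfolding hausdorff_linf_def by (simp add: SUP_le_iff)
  have H2': "\<forall>b\<in>graph_of S' h'. (INF a\<in>graph_of S h. ereal (linf_dist2 a b)) \<le> ereal \<epsilon>"
    using assms(6) unfolding hausdorff_linf_def by (simp add: SUP_le_iff)
  have H2: "\<forall>a\<in>graph_of S' h'. (INF b\<in>graph_of S h. ereal (linf_dist2 a b)) \<le> ereal \<epsilon>"
    using H2' by (simp add: linf2_sym)
  have "interleaved \<epsilon> M M'"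
  proof (rule interleave[OF gF gG])
    show "\<And>s t. s \<le> t \<Longrightarrow> grid_filt \<epsilon> S h s \<subseteq> grid_filt \<epsilon> S h t" by (rule filt_mono[OF e])
    show "\<And>s t. s \<le> t \<Longrightarrow> grid_filt \<epsilon> S' h' s \<subseteq> grid_filt \<epsilon> S' h' t" by (rule filt_mono[OF e])
    show "\<And>t. grid_filt \<epsilon> S h t \<subseteq> grid_filt \<epsilon> S' h' (t + \<epsilon>)" by (rule filt_shift[OF e assms(3) H1])
    show "\<And>t. grid_filt \<epsilon> S' h' t \<subseteq> grid_filt \<epsilon> S h (t + \<epsilon>)" by (rule filt_shift[OF e assms(2) H2])
    show "0 \<le> \<epsilon>" using e by simp
  qed
  then have "\<epsilon> \<in> {\<delta>. 0 \<le> \<delta> \<and> interleaved \<delta> M M'}" using e by simp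
  then show ?thesis unfolding interleaving_dist_def by (rule INF_lower)
qed

end
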